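(* There exists an operator $T\in B(\ell^2)$ which is similar to a contraction but whose mean transform $M(T)$ is not power bounded, i.e. $\sup_{n\ge1}\|M(T)^n\|=\infty$.
   Context: For $T\in B(H)$ with polar decomposition $T=V|T|$ ($|T|=(T^*T)^{1/2}$, $V$ the partial isometry with $\ker V=\ker T$), the mean transform is $M(T)=\frac12(|T|V+V|T|)$. $T$ is similar to a contraction if there is an invertible $L\in B(H)$ with $\|L^{-1}TL\|\le1$. *)

theory Defs
  imports Complex_Main
begin

text \<open>Operators are total functions on sequences; a bounded
  operator maps l2 into l2, is linear and bounded on l2, and (normalisation) sends
  every sequence outside l2 to 0, so operator equality is equality on l2.\<close>

definition l2 :: "(nat \<Rightarrow> complex) set" where
  "l2 = {x. summable (\<lambda>n. (cmod (x n))\<^sup>2)}"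

definition l2norm :: "(nat \<Rightarrow> complex) \<Rightarrow> real" where
  "l2norm x = sqrt (\<Sum>n. (cmod (x n))\<^sup>2)"

definition l2inner :: "(nat \<Rightarrow> complex) \<Rightarrow> (nat \<Rightarrow> complex) \<Rightarrow> complex" where
  "l2inner x y = (\<Sum>n. x n * cnj (y n))"

type_synonym op = "(nat \<Rightarrow> complex) \<Rightarrow> (nat \<Rightarrow> complex)"

definition bounded_op :: "op \<Rightarrow> bool" where
  "bounded_op T \<longleftrightarrow>
     (\<forall>x\<in>l2. T x \<in> l2) \<and>
     (\<forall>x\<in>l2. \<forall>y\<in>l2. \<forall>a b. T (\<lambda>n. a * x n + b * y n) = (\<lambda>n. a * T x n + b * T y n)) \<and>
     (\<exists>C. \<forall>x\<in>l2. l2norm (T x) \<le> C * l2norm x) \<and>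
     (\<forall>x. x \<notin> l2 \<longrightarrow> T x = (\<lambda>_. 0))"

definition opnorm :: "op \<Rightarrow> real" where
  "opnorm T = Sup {l2norm (T x) | x. x \<in> l2 \<and> l2norm x \<le> 1}"

definition kernel :: "op \<Rightarrow> (nat \<Rightarrow> complex) set" where
  "kernel T = {x \<in> l2. T x = (\<lambda>_. 0)}"

definition orth_compl :: "(nat \<Rightarrow> complex) set \<Rightarrow> (nat \<Rightarrow> complex) set" where
  "orth_compl K = {y \<in> l2. \<forall>x\<in>K. l2inner x y = 0}"

definition adj :: "op \<Rightarrow> op" where
  "adj T = (THE S. bounded_op S \<and> (\<forall>x\<in>l2. \<forall>y\<in>l2. l2inner (T x) y = l2inner x (S y)))"

definition positive_op :: "op \<Rightarrow> bool" where
  "positive_op S \<longleftrightarrow> bounded_op S \<and>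
     (\<forall>x\<in>l2. Im (l2inner (S x) x) = 0 \<and> Re (l2inner (S x) x) \<ge> 0)"

definition absop :: "op \<Rightarrow> op" where
  "absop T = (THE S. positive_op S \<and> S \<circ> S = adj T \<circ> T)"

definition partial_isometry :: "op \<Rightarrow> bool" where
  "partial_isometry V \<longleftrightarrow> bounded_op V \<and>
     (\<forall>x \<in> orth_compl (kernel V). l2norm (V x) = l2norm x)"

definition polarV :: "op \<Rightarrow> op" where
  "polarV T = (THE V. partial_isometry V \<and> kernel V = kernel T \<and> T = V \<circ> absop T)"

definition mean_transform :: "op \<Rightarrow> op" where
  "mean_transform T = (\<lambda>x n. (absop T (polarV T x) n + polarV T (absop T x) n) / 2)"

definition similar_to_contraction :: "op \<Rightarrow> bool" where
  "similar_to_contraction T \<longleftrightarrow>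
     (\<exists>L Linv. bounded_op L \<and> bounded_op Linv \<and>
        (\<forall>x\<in>l2. Linv (L x) = x \<and> L (Linv x) = x) \<and>
        opnorm (Linv \<circ> T \<circ> L) \<le> 1)"

definition power_bounded :: "op \<Rightarrow> bool" where
  "power_bounded T \<longleftrightarrow> (\<exists>C. \<forall>n\<ge>1. opnorm (T ^^ n) \<le> C)"

end

theory Submission imports Defs "HOL-Analysis.Analysis" begin

definition sg :: "nat \<Rightarrow> nat" where "sg n = (if even n then Suc n else n - 1)"
definition G :: "op \<Rightarrow> op" where "G f x = (if x \<in> l2 then f x else (\<lambda>_. 0))"
definition dg :: "(nat \<Rightarrow> complex) \<Rightarrow> op" where "dg d x = (\<lambda>n. d n * x n)"
definition sw :: "op" where "sw x = (\<lambda>n. x (sg n))"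

lemma sg_sg[simp]: "sg (sg n) = n" unfolding sg_def by auto
lemma bij_sg: "bij sg" by (metis bij_betw_def inj_def sg_sg surj_def)

lemma reindex_bij:
  fixes f :: "nat \<Rightarrow> 'a::banach"
  assumes g: "bij g" and s: "summable (\<lambda>n. norm (f n))"
  shows "summable (\<lambda>n. norm (f (g n)))" "suminf (\<lambda>n. f (g n)) = suminf f"
proof -
  have "(f has_sum suminf f) UNIV"
    using norm_summable_imp_has_sum[OF s] s summable_norm_cancel summable_sums by blast
  hence "((\<lambda>n. f (g n)) has_sum suminf f) UNIV" using has_sum_reindex_bij_betw[OF g] by blast
  thus "suminf (\<lambda>n. f (g n)) = suminf f" using has_sum_imp_sums sums_unique by metis
  have "((\<lambda>n. norm (f n)) has_sum suminf (\<lambda>n. norm (f n))) UNIV"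
    using norm_summable_imp_has_sum[of "\<lambda>n. norm (f n)"] s summable_sums by auto
  hence "((\<lambda>n. norm (f (g n))) has_sum suminf (\<lambda>n. norm (f n))) UNIV"
    using has_sum_reindex_bij_betw[OF g, of "\<lambda>n. norm (f n)"] by blast
  thus "summable (\<lambda>n. norm (f (g n)))" using has_sum_imp_sums sums_summable by blast
qed

lemma l2I: "summable (\<lambda>n. (cmod (x n))\<^sup>2) \<Longrightarrow> x \<in> l2" by (simp add: l2_def)
lemma l2D: "x \<in> l2 \<Longrightarrow> summable (\<lambda>n. (cmod (x n))\<^sup>2)" by (simp add: l2_def)

lemma l2_zero[simp]: "(\<lambda>_. 0) \<in> l2" "l2norm (\<lambda>_. 0) = 0"
  by (auto simp: l2_def l2norm_def)

lemma l2_sw: assumes "x \<in> l2" shows "sw x \<in> l2" "l2norm (sw x) = l2norm x"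
proof -
  have s: "summable (\<lambda>n. norm ((cmod (x n))\<^sup>2))" using l2D[OF assms] by simp
  show "sw x \<in> l2" using reindex_bij(1)[OF bij_sg s] by (simp add: sw_def l2_def)
  show "l2norm (sw x) = l2norm x" using reindex_bij(2)[OF bij_sg s] by (simp add: sw_def l2norm_def)
qed

lemma l2_dg: assumes "x \<in> l2" and B: "\<And>n. cmod (d n) \<le> B"
  shows "dg d x \<in> l2" "l2norm (dg d x) \<le> B * l2norm x"
proof -
  have B0: "B \<ge> 0" using B[of 0] norm_ge_zero order_trans by blast
  have le: "(cmod (d n * x n))\<^sup>2 \<le> B\<^sup>2 * (cmod (x n))\<^sup>2" for n
    by (simp add: norm_mult power_mult_distrib mult_right_mono power_mono B)
  have s: "summable (\<lambda>n. B\<^sup>2 * (cmod (x n))\<^sup>2)" using l2D[OF assms(1)] summable_mult by blast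
  have s2: "summable (\<lambda>n. (cmod (d n * x n))\<^sup>2)"
    by (rule summable_comparison_test'[OF s]) (use le in auto)
  thus "dg d x \<in> l2" by (simp add: dg_def l2_def)
  have "(\<Sum>n. (cmod (d n * x n))\<^sup>2) \<le> (\<Sum>n. B\<^sup>2 * (cmod (x n))\<^sup>2)"
    by (rule suminf_le[OF le s2 s])
  also have "\<dots> = B\<^sup>2 * (\<Sum>n. (cmod (x n))\<^sup>2)" using suminf_mult l2D[OF assms(1)] by blast
  finally have "sqrt (\<Sum>n. (cmod (d n * x n))\<^sup>2) \<le> sqrt (B\<^sup>2 * (\<Sum>n. (cmod (x n))\<^sup>2))"
    using real_sqrt_le_mono by blast
  also have "\<dots> = B * l2norm x" using B0 by (simp add: real_sqrt_mult l2norm_def)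
  finally show "l2norm (dg d x) \<le> B * l2norm x" by (simp add: dg_def l2norm_def)
qed

lemma l2_scale: assumes "x \<in> l2"
  shows "(\<lambda>n. c * x n) \<in> l2" "l2norm (\<lambda>n. c * x n) = cmod c * l2norm x"
proof -
  have e: "(\<Sum>n. (cmod (c * x n))\<^sup>2) = (cmod c)\<^sup>2 * (\<Sum>n. (cmod (x n))\<^sup>2)"
    using suminf_mult[OF l2D[OF assms]] by (simp add: norm_mult power_mult_distrib)
  show "(\<lambda>n. c * x n) \<in> l2" using summable_mult[OF l2D[OF assms], of "(cmod c)\<^sup>2"]
    by (simp add: l2_def norm_mult power_mult_distrib)
  show "l2norm (\<lambda>n. c * x n) = cmod c * l2norm x"
    unfolding l2norm_def e by (simp add: real_sqrt_mult)
qed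

lemma l2_lin: assumes "x \<in> l2" "y \<in> l2" shows "(\<lambda>n. a * x n + b * y n) \<in> l2"
proof -
  have le: "(cmod (a * x n + b * y n))\<^sup>2 \<le> 2 * (cmod (a * x n))\<^sup>2 + 2 * (cmod (b * y n))\<^sup>2" for n
  proof -
    have "cmod (a * x n + b * y n) \<le> cmod (a * x n) + cmod (b * y n)" by (rule norm_triangle_ineq)
    hence "(cmod (a * x n + b * y n))\<^sup>2 \<le> (cmod (a * x n) + cmod (b * y n))\<^sup>2"
      by (simp add: power_mono)
    also have "\<dots> \<le> 2 * (cmod (a * x n))\<^sup>2 + 2 * (cmod (b * y n))\<^sup>2"
      by (smt (verit) sum_squares_bound power2_sum zero_le_power2)
    finally show ?thesis .
  qed
  have s: "summable (\<lambda>n. 2 * (cmod (a * x n))\<^sup>2 + 2 * (cmod (b * y n))\<^sup>2)"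
    using l2D[OF l2_scale(1)[OF assms(1), of a]] l2D[OF l2_scale(1)[OF assms(2), of b]]
    by (intro summable_add summable_mult) auto
  show ?thesis unfolding l2_def
    by (simp, rule summable_comparison_test'[OF s]) (use le in auto)
qed

lemma bounded_op_G:
  assumes "\<And>x. x \<in> l2 \<Longrightarrow> f x \<in> l2"
    and "\<And>x y a b. f (\<lambda>n. a * x n + b * y n) = (\<lambda>n. a * f x n + b * f y n)"
    and "\<And>x. x \<in> l2 \<Longrightarrow> l2norm (f x) \<le> C * l2norm x"
  shows "bounded_op (G f)"
  unfolding bounded_op_def G_def using assms l2_lin by (auto, blast)


definition rw :: "nat \<Rightarrow> real" where "rw n = (if even n then 2 else 1/2)"
definition w :: "nat \<Rightarrow> complex" where "w n = complex_of_real (rw n)"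
definition Top :: op where "Top = G (\<lambda>x. sw (dg w x))"
definition Aop :: op where "Aop = G (dg w)"
definition Vop :: op where "Vop = G sw"
definition Sadj :: op where "Sadj = G (\<lambda>x. dg w (sw x))"

lemma w_bound: "cmod (w n) \<le> 2" by (simp add: w_def rw_def)
lemma cnj_w[simp]: "cnj (w n) = w n" by (simp add: w_def)
lemma w_nz[simp]: "w n \<noteq> 0" by (simp add: w_def rw_def)

lemma l2_Top: "x \<in> l2 \<Longrightarrow> sw (dg w x) \<in> l2" "x \<in> l2 \<Longrightarrow> dg w (sw x) \<in> l2" "x \<in> l2 \<Longrightarrow> dg w x \<in> l2"
  using l2_sw l2_dg w_bound by blast+

lemma bounded_Top: "bounded_op Top"
  unfolding Top_def
proof (rule bounded_op_G[where C=2])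
  show "x \<in> l2 \<Longrightarrow> sw (dg w x) \<in> l2" for x by (rule l2_Top)
  show "sw (dg w (\<lambda>n. a * x n + b * y n)) = (\<lambda>n. a * sw (dg w x) n + b * sw (dg w y) n)" for x y a b
    by (simp add: sw_def dg_def fun_eq_iff algebra_simps)
  show "x \<in> l2 \<Longrightarrow> l2norm (sw (dg w x)) \<le> 2 * l2norm x" for x
    using l2_sw(2)[OF l2_Top(3)] l2_dg(2)[OF _ w_bound] by simp
qed

lemma bounded_Sadj: "bounded_op Sadj"
  unfolding Sadj_def
proof (rule bounded_op_G[where C=2])
  show "x \<in> l2 \<Longrightarrow> dg w (sw x) \<in> l2" for x by (rule l2_Top)
  show "dg w (sw (\<lambda>n. a * x n + b * y n)) = (\<lambda>n. a * dg w (sw x) n + b * dg w (sw y) n)" for x y a b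
    by (simp add: sw_def dg_def fun_eq_iff algebra_simps)
  show "x \<in> l2 \<Longrightarrow> l2norm (dg w (sw x)) \<le> 2 * l2norm x" for x
    using l2_sw(2) l2_dg(2)[OF l2_sw(1) w_bound] by simp
qed

lemma bounded_Aop: "bounded_op Aop"
  unfolding Aop_def
proof (rule bounded_op_G[where C=2])
  show "x \<in> l2 \<Longrightarrow> dg w x \<in> l2" for x by (rule l2_Top)
  show "dg w (\<lambda>n. a * x n + b * y n) = (\<lambda>n. a * dg w x n + b * dg w y n)" for x y a b
    by (simp add: dg_def fun_eq_iff algebra_simps)
  show "x \<in> l2 \<Longrightarrow> l2norm (dg w x) \<le> 2 * l2norm x" for x
    using l2_dg(2)[OF _ w_bound] by simp
qed

lemma bounded_Vop: "bounded_op Vop"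
  unfolding Vop_def
proof (rule bounded_op_G[where C=1])
  show "x \<in> l2 \<Longrightarrow> sw x \<in> l2" for x by (rule l2_sw)
  show "sw (\<lambda>n. a * x n + b * y n) = (\<lambda>n. a * sw x n + b * sw y n)" for x y a b
    by (simp add: sw_def fun_eq_iff)
  show "x \<in> l2 \<Longrightarrow> l2norm (sw x) \<le> 1 * l2norm x" for x
    using l2_sw by simp
qed

lemma inner_summable: assumes "x \<in> l2" "y \<in> l2"
  shows "summable (\<lambda>n. norm (x n * cnj (y n)))"
proof -
  have le: "norm (x n * cnj (y n)) \<le> (cmod (x n))\<^sup>2 + (cmod (y n))\<^sup>2" for n
  proof -
    have "2 * cmod (x n) * cmod (y n) \<le> (cmod (x n))\<^sup>2 + (cmod (y n))\<^sup>2" by (rule sum_squares_bound)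
    moreover have "0 \<le> cmod (x n) * cmod (y n)" by simp
    moreover have "norm (x n * cnj (y n)) = cmod (x n) * cmod (y n)" by (simp add: norm_mult)
    ultimately show ?thesis by linarith
  qed
  show ?thesis
    by (rule summable_comparison_test'[OF summable_add[OF l2D[OF assms(1)] l2D[OF assms(2)]]]) (use le in auto)
qed

definition ee :: "nat \<Rightarrow> nat \<Rightarrow> complex" where "ee k = (\<lambda>n. if n = k then 1 else 0)"

lemma ee_l2: "ee k \<in> l2" "l2norm (ee k) = 1"
proof -
  have "(\<lambda>n. (cmod (ee k n))\<^sup>2) = (\<lambda>n. if n = k then 1 else 0)" by (auto simp: ee_def)
  moreover have "(\<lambda>n. if n = k then (1::real) else 0) sums 1" using sums_single[of k "\<lambda>_. 1::real"] by simp
  ultimately show "ee k \<in> l2" "l2norm (ee k) = 1" by (auto simp: l2_def l2norm_def sums_iff)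
qed

lemma inner_ee: "l2inner (ee k) z = cnj (z k)"
proof -
  have "(\<lambda>n. ee k n * cnj (z n)) = (\<lambda>n. if n = k then cnj (z k) else 0)" by (auto simp: ee_def)
  thus ?thesis unfolding l2inner_def using sums_single[of k "\<lambda>_. cnj (z k)"] sums_unique by metis
qed

lemma adj_prop: assumes "x \<in> l2" "y \<in> l2" shows "l2inner (Top x) y = l2inner x (Sadj y)"
proof -
  define f where "f m = w m * (x m * cnj (y (sg m)))" for m
  have s0: "summable (\<lambda>m. norm (x m * cnj (sw y m)))" using inner_summable[OF assms(1) l2_sw(1)[OF assms(2)]] .
  have s: "summable (\<lambda>m. norm (f m))"
  proof (rule summable_comparison_test'[OF summable_mult[OF s0, of 2]])
    fix m
    have "norm (f m) = cmod (w m) * norm (x m * cnj (sw y m))" by (simp add: f_def sw_def norm_mult)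
    also have "\<dots> \<le> 2 * norm (x m * cnj (sw y m))" by (rule mult_right_mono[OF w_bound]) simp
    finally show "norm (norm (f m)) \<le> 2 * norm (x m * cnj (sw y m))" by simp
  qed
  have "l2inner (Top x) y = (\<Sum>n. f (sg n))"
    using assms by (simp add: l2inner_def Top_def G_def sw_def dg_def f_def mult.assoc)
  also have "\<dots> = suminf f" by (rule reindex_bij(2)[OF bij_sg s])
  also have "\<dots> = l2inner x (Sadj y)"
    using assms by (simp add: l2inner_def Sadj_def G_def sw_def dg_def f_def[abs_def] algebra_simps)
  finally show ?thesis .
qed

lemma bounded_out: "bounded_op S \<Longrightarrow> x \<notin> l2 \<Longrightarrow> S x = (\<lambda>_. 0)" by (simp add: bounded_op_def)
lemma bounded_in: "bounded_op S \<Longrightarrow> x \<in> l2 \<Longrightarrow> S x \<in> l2" by (simp add: bounded_op_def)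

lemma adj_Top: "adj Top = Sadj"
  unfolding adj_def
proof (rule the_equality)
  show "bounded_op Sadj \<and> (\<forall>x\<in>l2. \<forall>y\<in>l2. l2inner (Top x) y = l2inner x (Sadj y))"
    using bounded_Sadj adj_prop by blast
  fix S assume S: "bounded_op S \<and> (\<forall>x\<in>l2. \<forall>y\<in>l2. l2inner (Top x) y = l2inner x (S y))"
  show "S = Sadj"
  proof
    fix y show "S y = Sadj y"
    proof (cases "y \<in> l2")
      case True
      show ?thesis
      proof
        fix k
        have "cnj (S y k) = cnj (Sadj y k)"
          using S adj_prop[OF ee_l2(1) True] True ee_l2(1)[of k] by (metis inner_ee)
        thus "S y k = Sadj y k" by simp
      qed
    next
      case False thus ?thesis using S bounded_Sadj bounded_out by metis
    qed
  qed
qed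


lemma cnj_sq: "z * cnj z = (complex_of_real (cmod z))\<^sup>2"
  by (metis complex_norm_square of_real_power)

lemma inner_self: assumes "y \<in> l2"
  shows "l2inner (\<lambda>n. a * y n) y = a * complex_of_real (\<Sum>n. (cmod (y n))\<^sup>2)"
proof -
  have "(\<lambda>n. a * y n * cnj (y n)) = (\<lambda>n. a * complex_of_real ((cmod (y n))\<^sup>2))"
    by (simp add: cnj_sq mult.assoc)
  moreover have "(\<Sum>n. a * complex_of_real ((cmod (y n))\<^sup>2)) = a * (\<Sum>n. complex_of_real ((cmod (y n))\<^sup>2))"
    by (rule suminf_mult) (rule summable_of_real[OF l2D[OF assms]])
  moreover have "complex_of_real (\<Sum>n. (cmod (y n))\<^sup>2) = (\<Sum>n. complex_of_real ((cmod (y n))\<^sup>2))"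
    by (rule suminf_of_real[OF l2D[OF assms]])
  ultimately show ?thesis by (simp add: l2inner_def)
qed

lemma lin1: "bounded_op A \<Longrightarrow> x \<in> l2 \<Longrightarrow> A (\<lambda>n. a * x n) = (\<lambda>n. a * A x n)"
proof -
  assume A: "bounded_op A" and x: "x \<in> l2"
  have "A (\<lambda>n. a * x n + 0 * x n) = (\<lambda>n. a * A x n + 0 * A x n)"
    using A x unfolding bounded_op_def by blast
  thus ?thesis by simp
qed

lemma lin2: "bounded_op A \<Longrightarrow> x \<in> l2 \<Longrightarrow> y \<in> l2 \<Longrightarrow> A (\<lambda>n. a * x n + b * y n) = (\<lambda>n. a * A x n + b * A y n)"
  unfolding bounded_op_def by blast

lemma DTop: "x \<in> l2 \<Longrightarrow> Sadj (Top x) = (\<lambda>n. w n * (w n * x n))"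
  using l2_Top by (simp add: Sadj_def Top_def G_def dg_def sw_def)

lemma part:
  assumes A: "positive_op A" and AA: "\<And>x. A (A x) = Sadj (Top x)"
    and c: "c > 0" and hw: "\<And>n. P n \<Longrightarrow> w n = complex_of_real c"
    and x: "x \<in> l2" and supp: "\<And>n. \<not> P n \<Longrightarrow> x n = 0"
  shows "A x = (\<lambda>n. complex_of_real c * x n)"
proof -
  have Ab: "bounded_op A" using A by (simp add: positive_op_def)
  define z where "z = A x"
  have z: "z \<in> l2" using bounded_in[OF Ab x] z_def by simp
  have Az: "A z = (\<lambda>n. complex_of_real c * (complex_of_real c * x n))"
    unfolding z_def AA DTop[OF x]
  proof
    fix n show "w n * (w n * x n) = complex_of_real c * (complex_of_real c * x n)"
      by (cases "P n") (simp_all add: hw supp)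
  qed
  define y where "y = (\<lambda>n. 1 * z n + (- complex_of_real c) * x n)"
  have y: "y \<in> l2" unfolding y_def by (rule l2_lin[OF z x])
  have Ay: "A y = (\<lambda>n. (- complex_of_real c) * y n)"
    unfolding y_def lin2[OF Ab z x] Az z_def[symmetric] by (simp add: fun_eq_iff algebra_simps)
  have "Re (l2inner (A y) y) \<ge> 0" using A y by (simp add: positive_op_def)
  hence "- c * (\<Sum>n. (cmod (y n))\<^sup>2) \<ge> 0" unfolding Ay inner_self[OF y] by simp
  moreover have "(\<Sum>n. (cmod (y n))\<^sup>2) \<ge> 0" by (rule suminf_nonneg[OF l2D[OF y]]) simp
  moreover have "c * (\<Sum>n. (cmod (y n))\<^sup>2) \<le> 0 \<Longrightarrow> (\<Sum>n. (cmod (y n))\<^sup>2) \<le> 0"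
    using c by (auto simp: mult_le_0_iff)
  ultimately have "(\<Sum>n. (cmod (y n))\<^sup>2) = 0" by linarith
  hence "\<forall>n. (cmod (y n))\<^sup>2 = 0" using suminf_eq_zero_iff[OF l2D[OF y]] by simp
  hence "\<And>n. z n = complex_of_real c * x n" by (simp add: y_def)
  thus ?thesis using z_def by auto
qed

lemma sqrt_unique:
  assumes A: "positive_op A" and AA: "A \<circ> A = Sadj \<circ> Top"
  shows "A = Aop"
proof
  have Ab: "bounded_op A" using A by (simp add: positive_op_def)
  have AA': "\<And>x. A (A x) = Sadj (Top x)" using AA by (metis comp_apply)
  fix x show "A x = Aop x"
  proof (cases "x \<in> l2")
    case False thus ?thesis using Ab bounded_Aop bounded_out by metis
  next
    case True
    define xe where "xe = dg (\<lambda>n. if even n then 1 else 0) x"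
    define xo where "xo = dg (\<lambda>n. if even n then 0 else 1) x"
    have xe: "xe \<in> l2" unfolding xe_def by (rule l2_dg(1)[OF True, where B=1]) simp
    have xo: "xo \<in> l2" unfolding xo_def by (rule l2_dg(1)[OF True, where B=1]) simp
    have "x = (\<lambda>n. 1 * xe n + 1 * xo n)" by (simp add: xe_def xo_def dg_def fun_eq_iff)
    hence "A x = (\<lambda>n. 1 * A xe n + 1 * A xo n)" using lin2[OF Ab xe xo] by metis
    also have "A xe = (\<lambda>n. complex_of_real 2 * xe n)"
      by (rule part[OF A AA' _ _ xe, where P=even]) (auto simp: w_def rw_def xe_def dg_def)
    also have "A xo = (\<lambda>n. complex_of_real (1/2) * xo n)"
      by (rule part[OF A AA' _ _ xo, where P=odd]) (auto simp: w_def rw_def xo_def dg_def)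
    finally show ?thesis using True by (simp add: Aop_def G_def xe_def xo_def dg_def w_def rw_def fun_eq_iff)
  qed
qed

lemma positive_Aop: "positive_op Aop"
  unfolding positive_op_def
proof (intro conjI ballI bounded_Aop)
  fix x assume x: "x \<in> l2"
  have s: "summable (\<lambda>n. rw n * (cmod (x n))\<^sup>2)"
    by (rule summable_comparison_test'[OF summable_mult[OF l2D[OF x], of 2]]) (auto simp: rw_def)
  have "l2inner (Aop x) x = (\<Sum>n. complex_of_real (rw n * (cmod (x n))\<^sup>2))"
    using x by (simp add: l2inner_def Aop_def G_def dg_def w_def cnj_sq mult.assoc)
  also have "\<dots> = complex_of_real (\<Sum>n. rw n * (cmod (x n))\<^sup>2)" by (rule suminf_of_real[OF s, symmetric])
  finally have e: "l2inner (Aop x) x = complex_of_real (\<Sum>n. rw n * (cmod (x n))\<^sup>2)" .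
  have "(\<Sum>n. rw n * (cmod (x n))\<^sup>2) \<ge> 0" by (rule suminf_nonneg[OF s]) (simp add: rw_def)
  thus "Im (l2inner (Aop x) x) = 0" "0 \<le> Re (l2inner (Aop x) x)" unfolding e by simp_all
qed

lemma AopAop: "Aop \<circ> Aop = Sadj \<circ> Top"
proof
  fix x show "(Aop \<circ> Aop) x = (Sadj \<circ> Top) x"
  proof (cases "x \<in> l2")
    case True thus ?thesis using l2_Top DTop[OF True] by (simp add: Aop_def G_def dg_def)
  next
    case False thus ?thesis by (simp add: Aop_def Sadj_def Top_def G_def dg_def sw_def)
  qed
qed

lemma absop_Top: "absop Top = Aop"
  unfolding absop_def adj_Top
proof (rule the_equality)
  show "positive_op Aop \<and> Aop \<circ> Aop = Sadj \<circ> Top" using positive_Aop AopAop by blast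
  fix S assume "positive_op S \<and> S \<circ> S = Sadj \<circ> Top" thus "S = Aop" using sqrt_unique by blast
qed

lemma sw_zero: "sw x = (\<lambda>_. 0) \<longleftrightarrow> x = (\<lambda>_. 0)"
proof
  assume "sw x = (\<lambda>_. 0)"
  hence "\<And>n. x (sg (sg n)) = 0" by (metis sw_def)
  thus "x = (\<lambda>_. 0)" by auto
qed (simp add: sw_def)

lemma dgw_zero: "dg w x = (\<lambda>_. 0) \<longleftrightarrow> x = (\<lambda>_. 0)"
  by (auto simp: dg_def fun_eq_iff)

lemma polarV_Top: "polarV Top = Vop"
  unfolding polarV_def absop_Top
proof (rule the_equality)
  have pi: "partial_isometry Vop"
    unfolding partial_isometry_def using bounded_Vop l2_sw(2)
    by (auto simp: orth_compl_def Vop_def G_def)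
  have ker: "kernel Vop = kernel Top"
    by (auto simp: kernel_def Vop_def Top_def G_def sw_zero dgw_zero)
  have fac: "Top = Vop \<circ> Aop"
  proof
    fix x show "Top x = (Vop \<circ> Aop) x"
      by (cases "x \<in> l2") (simp_all add: Top_def Vop_def Aop_def G_def l2_Top, simp add: sw_def)
  qed
  show "partial_isometry Vop \<and> kernel Vop = kernel Top \<and> Top = Vop \<circ> Aop" using pi ker fac by blast
  fix V assume V: "partial_isometry V \<and> kernel V = kernel Top \<and> Top = V \<circ> Aop"
  have Vb: "bounded_op V" using V by (simp add: partial_isometry_def)
  show "V = Vop"
  proof
    fix y show "V y = Vop y"
    proof (cases "y \<in> l2")
      case False thus ?thesis using Vb bounded_Vop bounded_out by metis
    next
      case True
      define z where "z = dg (\<lambda>n. 1 / w n) y"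
      have z: "z \<in> l2" unfolding z_def
        by (rule l2_dg(1)[OF True, where B=2]) (simp add: w_def rw_def norm_divide)
      have Az: "Aop z = y" using z by (simp add: Aop_def G_def z_def dg_def)
      have "V y = Top z" using V Az by (metis comp_apply)
      also have "\<dots> = Vop y" using z True by (simp add: Top_def Vop_def G_def z_def dg_def)
      finally show ?thesis .
    qed
  qed
qed

lemma sg_even: "even n \<Longrightarrow> sg n = Suc n" by (simp add: sg_def)
lemma sg_odd: "odd n \<Longrightarrow> sg n = n - 1 \<and> even (n - 1)" by (simp add: sg_def)

lemma w_sum: "w n + w (sg n) = 5/2"
proof (cases "even n")
  case True thus ?thesis by (simp add: sg_even w_def rw_def)
next
  case False thus ?thesis using sg_odd[OF False] by (simp add: w_def rw_def)
qed

definition Mop :: op where "Mop = G (\<lambda>x n. 5/4 * x (sg n))"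

lemma mean_Top: "mean_transform Top = Mop"
  unfolding mean_transform_def absop_Top polarV_Top
proof (intro ext)
  fix x n show "(Aop (Vop x) n + Vop (Aop x) n) / 2 = Mop x n"
  proof (cases "x \<in> l2")
    case True
    have "(Aop (Vop x) n + Vop (Aop x) n) / 2 = (w n + w (sg n)) / 2 * x (sg n)"
      using True l2_sw(1)[OF True] l2_Top(3)[OF True]
      by (simp add: Aop_def Vop_def G_def dg_def sw_def algebra_simps add_divide_distrib)
    also have "\<dots> = Mop x n" using True by (simp add: w_sum Mop_def G_def)
    finally show ?thesis .
  next
    case False thus ?thesis by (simp add: Aop_def Vop_def Mop_def G_def dg_def sw_def)
  qed
qed

lemma Mop_pow: "x \<in> l2 \<Longrightarrow> (Mop ^^ k) x \<in> l2 \<and> l2norm ((Mop ^^ k) x) = (5/4)^k * l2norm x"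
proof (induction k)
  case 0 thus ?case by simp
next
  case (Suc k)
  define y where "y = (Mop ^^ k) x"
  have y: "y \<in> l2" "l2norm y = (5/4)^k * l2norm x" using Suc y_def by auto
  have My: "Mop y = (\<lambda>n. 5/4 * sw y n)" using y by (simp add: Mop_def G_def sw_def)
  have "Mop y \<in> l2" "l2norm (Mop y) = 5/4 * l2norm y"
    unfolding My using l2_scale[OF l2_sw(1)[OF y(1)], of "5/4"] l2_sw(2)[OF y(1)] by auto
  thus ?case using y y_def by simp
qed

lemma opnorm_Mop: "opnorm (Mop ^^ k) \<ge> (5/4)^k"
  unfolding opnorm_def
proof (rule cSup_upper)
  show "(5/4)^k \<in> {l2norm ((Mop ^^ k) x) |x. x \<in> l2 \<and> l2norm x \<le> 1}"
  proof -
    have "l2norm ((Mop ^^ k) (ee 0)) = (5/4)^k" using Mop_pow[OF ee_l2(1)[of 0]] ee_l2(2)[of 0] by simp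
    thus ?thesis unfolding mem_Collect_eq using ee_l2[of 0] by (intro exI[of _ "ee 0"]) simp
  qed
  show "bdd_above {l2norm ((Mop ^^ k) x) |x. x \<in> l2 \<and> l2norm x \<le> 1}"
  proof (rule bdd_aboveI[where M="(5/4)^k"])
    fix r assume "r \<in> {l2norm ((Mop ^^ k) x) |x. x \<in> l2 \<and> l2norm x \<le> 1}"
    then obtain x where x: "x \<in> l2" "l2norm x \<le> 1" "r = l2norm ((Mop ^^ k) x)" by blast
    hence "r = (5/4)^k * l2norm x" using Mop_pow by simp
    thus "r \<le> (5/4)^k" using x(2) by (simp add: mult_left_le)
  qed
qed

lemma not_pb: "\<not> power_bounded Mop"
proof
  assume "power_bounded Mop"
  then obtain C where C: "\<And>n. n \<ge> 1 \<Longrightarrow> opnorm (Mop ^^ n) \<le> C" by (auto simp: power_bounded_def)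
  obtain n where n: "C < (5/4::real)^n" using real_arch_pow[of "5/4" C] by auto
  have "(5/4::real)^n \<le> (5/4)^Suc n" by simp
  also have "\<dots> \<le> opnorm (Mop ^^ Suc n)" by (rule opnorm_Mop)
  also have "\<dots> \<le> C" by (rule C) simp
  finally show False using n by simp
qed

lemma bounded_dg: assumes "\<And>n. cmod (d n) \<le> B" shows "bounded_op (G (dg d))"
proof (rule bounded_op_G[where C=B])
  show "x \<in> l2 \<Longrightarrow> dg d x \<in> l2" for x using l2_dg(1) assms by blast
  show "dg d (\<lambda>n. a * x n + b * y n) = (\<lambda>n. a * dg d x n + b * dg d y n)" for x y a b
    by (simp add: dg_def fun_eq_iff algebra_simps)
  show "x \<in> l2 \<Longrightarrow> l2norm (dg d x) \<le> B * l2norm x" for x using l2_dg(2) assms by blast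
qed

definition rl :: "nat \<Rightarrow> real" where "rl n = (if even n then 1 else 2)"

lemma rl_prod: "w (sg n) * (complex_of_real (rl (sg n)) * a) / complex_of_real (rl n) = a"
proof (cases "even n")
  case True thus ?thesis by (simp add: sg_even w_def rw_def rl_def)
next
  case False thus ?thesis using sg_odd[OF False] by (simp add: w_def rw_def rl_def)
qed

definition Lop :: op where "Lop = G (dg (\<lambda>n. complex_of_real (rl n)))"
definition Liop :: op where "Liop = G (dg (\<lambda>n. complex_of_real (1 / rl n)))"

lemma Lx: "x \<in> l2 \<Longrightarrow> dg (\<lambda>n. complex_of_real (rl n)) x \<in> l2"
  by (rule l2_dg(1)[where B=2]) (simp_all add: rl_def)
lemma Lix: "x \<in> l2 \<Longrightarrow> dg (\<lambda>n. complex_of_real (1 / rl n)) x \<in> l2"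
  by (rule l2_dg(1)[where B=1]) (simp_all add: rl_def)

lemma LiL: "x \<in> l2 \<Longrightarrow> Liop (Lop x) = x"
  using Lx[of x] by (simp add: Liop_def Lop_def G_def dg_def fun_eq_iff rl_def)
lemma LLi: "x \<in> l2 \<Longrightarrow> Lop (Liop x) = x"
  using Lix[of x] by (simp add: Liop_def Lop_def G_def dg_def fun_eq_iff rl_def)

lemma key: assumes x: "x \<in> l2" shows "Liop (Top (Lop x)) = sw x"
proof -
  have TLx: "sw (dg w (dg (\<lambda>n. complex_of_real (rl n)) x)) \<in> l2" by (rule l2_Top(1)[OF Lx[OF x]])
  have "Liop (Top (Lop x)) = dg (\<lambda>n. complex_of_real (1 / rl n)) (sw (dg w (dg (\<lambda>n. complex_of_real (rl n)) x)))"
    using x Lx[OF x] TLx by (simp add: G_def Top_def Lop_def Liop_def)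
  also have "\<dots> = sw x"
  proof
    fix n show "dg (\<lambda>n. complex_of_real (1 / rl n)) (sw (dg w (dg (\<lambda>n. complex_of_real (rl n)) x))) n = sw x n"
      unfolding dg_def sw_def using rl_prod[of n "x (sg n)"] by (simp add: divide_inverse mult.commute)
  qed
  finally show ?thesis .
qed

lemma similar_Top: "similar_to_contraction Top"
  unfolding similar_to_contraction_def
proof (rule exI[of _ Lop], rule exI[of _ Liop], intro conjI ballI)
  show "bounded_op Lop" unfolding Lop_def by (rule bounded_dg[where B=2]) (simp add: rl_def)
  show "bounded_op Liop" unfolding Liop_def by (rule bounded_dg[where B=1]) (simp add: rl_def)
  show "Liop (Lop x) = x" if "x \<in> l2" for x using LiL that .
  show "Lop (Liop x) = x" if "x \<in> l2" for x using LLi that .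
  show "opnorm (Liop \<circ> Top \<circ> Lop) \<le> 1"
    unfolding opnorm_def
  proof (rule cSup_least)
    have "l2norm ((Liop \<circ> Top \<circ> Lop) (\<lambda>_. 0)) \<in> {l2norm ((Liop \<circ> Top \<circ> Lop) x) |x. x \<in> l2 \<and> l2norm x \<le> 1}"
      unfolding mem_Collect_eq by (intro exI[of _ "\<lambda>_. 0"]) simp
    thus "{l2norm ((Liop \<circ> Top \<circ> Lop) x) |x. x \<in> l2 \<and> l2norm x \<le> 1} \<noteq> {}" by blast
    fix r assume "r \<in> {l2norm ((Liop \<circ> Top \<circ> Lop) x) |x. x \<in> l2 \<and> l2norm x \<le> 1}"
    then obtain x where x: "x \<in> l2" "l2norm x \<le> 1" "r = l2norm ((Liop \<circ> Top \<circ> Lop) x)" by blast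
    have "r = l2norm x" using x(3) key[OF x(1)] l2_sw(2)[OF x(1)] by simp
    thus "r \<le> 1" using x(2) by simp
  qed
qed

theorem mainTheorem11:
  shows "\<exists>T. bounded_op T \<and> similar_to_contraction T \<and> \<not> power_bounded (mean_transform T)"
  by (rule exI[of _ Top]) (simp add: bounded_Top similar_Top not_pb mean_Top)

end
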